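(* Let $G$ be a group with finite generating set $S$ and let $\Gamma$ be a tileset graph for $(G,S)$. The following are equivalent: (1) $\Gamma$ admits a bi-infinite snake; (2) $\Gamma$ admits a one-way infinite snake; (3) $\Gamma$ admits a snake of every length.
   Context: A tileset graph for $(G,S)$ is a finite multigraph $\Gamma=(A,B)$ whose edges are triples $(a,a',s)$ with $a,a'\in A$, $s\in S\cup S^{-1}$, such that $(a,a',s)\in B$ implies $(a',a,s^{-1})\in B$. For $I$ equal to $\mathbb{Z}$, $\mathbb{N}$ or a finite integer interval $\{n,\dots,m\}$, a $\Gamma$-snake on $I$ is a pair $(\omega,\zeta)$ with $\omega:I\to G$ injective and $\zeta:I\to A$ such that whenever $i,i+1\in I$: $d\omega_i:=\omega(i)^{-1}\omega(i+1)\in S\cup S^{-1}$ and $(\zeta(i),\zeta(i+1),d\omega_i)\in B$. It is bi-infinite if $I=\mathbb{Z}$, one-way infinite if $I=\mathbb{N}$; "a snake of every length" means that for every $n$ there is a $\Gamma$-snake on a finite interval with at least $n$ elements. *)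

theory Defs
  imports "HOL-Algebra.Algebra"
begin

definition sym_gens :: "('g, 'b) monoid_scheme \<Rightarrow> 'g set \<Rightarrow> 'g set" where
  "sym_gens G S = S \<union> (\<lambda>s. inv\<^bsub>G\<^esub> s) ` S"

definition tileset_graph ::
  "('g, 'b) monoid_scheme \<Rightarrow> 'g set \<Rightarrow> 'a set \<Rightarrow> ('a \<times> 'a \<times> 'g) set \<Rightarrow> bool" where
  "tileset_graph G S A B \<longleftrightarrow> finite A \<and> finite B \<and>
     (\<forall>(a, a', s) \<in> B. a \<in> A \<and> a' \<in> A \<and> s \<in> sym_gens G S) \<and>
     (\<forall>(a, a', s) \<in> B. (a', a, inv\<^bsub>G\<^esub> s) \<in> B)"

definition snake_on ::
  "('g, 'b) monoid_scheme \<Rightarrow> 'g set \<Rightarrow> 'a set \<Rightarrow> ('a \<times> 'a \<times> 'g) set \<Rightarrow>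
   int set \<Rightarrow> (int \<Rightarrow> 'g) \<Rightarrow> (int \<Rightarrow> 'a) \<Rightarrow> bool" where
  "snake_on G S A B I \<omega> \<zeta> \<longleftrightarrow>
     \<omega> ` I \<subseteq> carrier G \<and> inj_on \<omega> I \<and> \<zeta> ` I \<subseteq> A \<and>
     (\<forall>i. i \<in> I \<and> i + 1 \<in> I \<longrightarrow>
        inv\<^bsub>G\<^esub> (\<omega> i) \<otimes>\<^bsub>G\<^esub> \<omega> (i + 1) \<in> sym_gens G S \<and>
        (\<zeta> i, \<zeta> (i + 1), inv\<^bsub>G\<^esub> (\<omega> i) \<otimes>\<^bsub>G\<^esub> \<omega> (i + 1)) \<in> B)"

definition has_biinfinite_snake where
  "has_biinfinite_snake G S A B \<longleftrightarrow> (\<exists>\<omega> \<zeta>. snake_on G S A B UNIV \<omega> \<zeta>)"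

(* \<nat> is identified with the nonnegative integers {0..} *)
definition has_oneway_snake where
  "has_oneway_snake G S A B \<longleftrightarrow> (\<exists>\<omega> \<zeta>. snake_on G S A B {0..} \<omega> \<zeta>)"

definition has_snakes_of_every_length where
  "has_snakes_of_every_length G S A B \<longleftrightarrow>
     (\<forall>k::nat. \<exists>n m \<omega> \<zeta>. card {n..m} \<ge> k \<and> snake_on G S A B {n..m} \<omega> \<zeta>)"

end

theory Submission
  imports Defs "HOL-Library.Infinite_Set"
begin

definition J :: "nat \<Rightarrow> int set" where "J k = {- int k .. int k}"

lemma pigeon_step:
  fixes P :: "nat \<Rightarrow> (int \<Rightarrow> 'x) \<Rightarrow> bool"
  assumes mono: "\<And>N N' f. P N' f \<Longrightarrow> N \<le> N' \<Longrightarrow> P N f"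
  and fin: "finite (V::'x set)"
  and vals: "\<And>N f i. P N f \<Longrightarrow> k \<le> N \<Longrightarrow> i \<in> D \<Longrightarrow> f i \<in> V"
  and finD: "finite D"
  and ex: "\<forall>N\<ge>k. \<exists>f. P N f \<and> Q f"
  shows "\<exists>g. \<forall>N\<ge>k. \<exists>f. P N f \<and> Q f \<and> (\<forall>i\<in>D. f i = g i)"
proof -
  obtain F where F: "\<And>N. N \<ge> k \<Longrightarrow> P N (F N) \<and> Q (F N)" using ex by metis
  let ?r = "\<lambda>N. restrict (F N) D"
  have r: "restrict (F N) D \<in> PiE D (\<lambda>_. V)" if "N \<ge> k" for N
    using vals[OF conjunct1[OF F[OF that]] that] by (simp add: restrict_PiE_iff)
  have "?r ` {k..} \<subseteq> PiE D (\<lambda>_. V)" 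
  proof (rule image_subsetI)
    fix N assume "N \<in> {k..}"
    then show "restrict (F N) D \<in> PiE D (\<lambda>_. V)" by (intro r) simp
  qed
  hence fr: "finite (?r ` {k..})" by (rule finite_subset) (intro finite_PiE finD fin)
  have "infinite {k..}" by (simp add: infinite_Ici)
  from pigeonhole_infinite[OF this fr] obtain a0 where a0: "a0 \<in> {k..}"
    and inf: "infinite {a\<in>{k..}. ?r a = ?r a0}" by blast
  show ?thesis
  proof (rule exI[of _ "F a0"], intro allI impI)
    fix N assume N: "N \<ge> k"
    obtain N' where N': "N' \<ge> N" "N' \<in> {a\<in>{k..}. ?r a = ?r a0}"
      using inf unfolding infinite_nat_iff_unbounded_le by blast
    have "\<forall>i\<in>D. F N' i = F a0 i"
    proof
      fix i assume "i \<in> D"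
      then show "F N' i = F a0 i" using N'(2) by (metis (mono_tags, lifting) mem_Collect_eq restrict_apply')
    qed
    moreover have "N' \<ge> k" using N' by simp
    moreover have "P N (F N')" using mono[of N' "F N'" N] F[of N'] N' by simp
    ultimately show "\<exists>f. P N f \<and> Q f \<and> (\<forall>i\<in>D. f i = F a0 i)"
      using F[of N'] by blast
  qed
qed

lemma J_mono: "m \<le> n \<Longrightarrow> J m \<subseteq> J n" by (auto simp: J_def)
lemma finite_J: "finite (J k)" by (simp add: J_def)

lemma koenig:
  fixes P :: "nat \<Rightarrow> (int \<Rightarrow> 'x) \<Rightarrow> bool"
  assumes mono: "\<And>N N' f. P N' f \<Longrightarrow> N \<le> N' \<Longrightarrow> P N f"
  and local: "\<And>N f f'. P N f \<Longrightarrow> (\<forall>i\<in>J N. f i = f' i) \<Longrightarrow> P N f'"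
  and fin: "\<And>k. finite (V k)"
  and vals: "\<And>N f k i. P N f \<Longrightarrow> k \<le> N \<Longrightarrow> i \<in> J k \<Longrightarrow> f i \<in> V k"
  and ex: "\<And>N. \<exists>f. P N f"
  shows "\<exists>f. \<forall>N. P N f"
proof -
  define good where "good k g \<longleftrightarrow> (\<forall>N\<ge>k. \<exists>f. P N f \<and> (\<forall>i\<in>J k. f i = g i))" for k g
  have "\<exists>g. \<forall>N\<ge>0. \<exists>f. P N f \<and> True \<and> (\<forall>i\<in>J 0. f i = g i)"
    by (rule pigeon_step[of P "V 0" 0 "J 0" "\<lambda>_. True"]) (use mono fin vals finite_J ex in blast)+
  then have "\<exists>g. good 0 g"
    unfolding good_def by auto
  then obtain g0 where g0: "good 0 g0" by blast
  have step: "\<exists>g'. good (Suc k) g' \<and> (\<forall>i\<in>J k. g' i = g i)" if "good k g" for k g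
  proof -
    from that have "\<forall>N\<ge>Suc k. \<exists>f. P N f \<and> (\<forall>i\<in>J k. f i = g i)" by (auto simp: good_def)
    then have "\<exists>g'. \<forall>N\<ge>Suc k. \<exists>f. P N f \<and> (\<forall>i\<in>J k. f i = g i) \<and> (\<forall>i\<in>J (Suc k). f i = g' i)"
      by (intro pigeon_step[of P "V (Suc k)" "Suc k" "J (Suc k)"]) (use mono fin vals finite_J in blast)+
    then obtain g' where g': "\<forall>N\<ge>Suc k. \<exists>f. P N f \<and> (\<forall>i\<in>J k. f i = g i) \<and> (\<forall>i\<in>J (Suc k). f i = g' i)"
      by blast
    from g'[rule_format, OF order_refl]
    obtain f where f: "(\<forall>i\<in>J k. f i = g i) \<and> (\<forall>i\<in>J (Suc k). f i = g' i)" by blast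
    have "\<forall>i\<in>J k. g' i = g i"
    proof
      fix i assume i: "i \<in> J k"
      then have i2: "i \<in> J (Suc k)" by (auto simp: J_def)
      have "f i = g i" using f i by simp
      moreover have "f i = g' i" using f i2 by simp
      ultimately show "g' i = g i" by simp
    qed
    moreover have "good (Suc k) g'" using g' unfolding good_def by blast
    ultimately show ?thesis by blast
  qed
  define gs where "gs = rec_nat g0 (\<lambda>k g. SOME g'. good (Suc k) g' \<and> (\<forall>i\<in>J k. g' i = g i))"
  have gs0: "gs 0 = g0" by (simp add: gs_def)
  have gsS: "gs (Suc k) = (SOME g'. good (Suc k) g' \<and> (\<forall>i\<in>J k. g' i = gs k i))" for k
    by (simp add: gs_def)
  have gs: "good k (gs k) \<and> (\<forall>i\<in>J (k - 1). gs k i = gs (k - 1) i)" for k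
  proof (induction k)
    case 0 then show ?case using g0 gs0 by simp
  next
    case (Suc k)
    then have "good k (gs k)" by blast
    from someI_ex[OF step[OF this]] show ?case unfolding gsS[symmetric] by simp
  qed
  have agree: "\<forall>i\<in>J m. gs n i = gs m i" if "m \<le> n" for m n
    using that
  proof (induction n rule: dec_induct)
    case base then show ?case by simp
  next
    case (step n)
    have "\<forall>i\<in>J n. gs (Suc n) i = gs n i" using gs[of "Suc n"] by simp
    moreover have "J m \<subseteq> J n" using J_mono step(1) by blast
    ultimately show ?case using step.IH by (metis subsetD)
  qed
  define f where "f i = gs (nat \<bar>i\<bar>) i" for i
  have "P N f" for N
  proof -
    from gs[of N] obtain f' where f': "P N f'" "\<forall>i\<in>J N. f' i = gs N i"
      unfolding good_def by blast
    have "\<forall>i\<in>J N. f' i = f i"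
    proof
      fix i assume i: "i \<in> J N"
      then have le: "nat \<bar>i\<bar> \<le> N" by (auto simp: J_def)
      have "i \<in> J (nat \<bar>i\<bar>)" by (auto simp: J_def)
      then show "f' i = f i" using agree[OF le] f'(2) i by (simp add: f_def)
    qed
    then show ?thesis using local f'(1) by blast
  qed
  then show ?thesis by blast
qed


lemma snake_mono: "snake_on G S A B I w z \<Longrightarrow> I' \<subseteq> I \<Longrightarrow> snake_on G S A B I' w z"
  unfolding snake_on_def by (auto intro: inj_on_subset)

lemma snake_local: "snake_on G S A B I w z \<Longrightarrow> \<forall>i\<in>I. w i = w' i \<and> z i = z' i
   \<Longrightarrow> snake_on G S A B I w' z'"
  unfolding snake_on_def
proof (elim conjE, intro conjI)
  assume h: "\<forall>i\<in>I. w i = w' i \<and> z i = z' i" "w ` I \<subseteq> carrier G" "inj_on w I" "z ` I \<subseteq> A"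
   "\<forall>i. i \<in> I \<and> i + 1 \<in> I \<longrightarrow>
        inv\<^bsub>G\<^esub> w i \<otimes>\<^bsub>G\<^esub> w (i + 1) \<in> sym_gens G S \<and>
        (z i, z (i + 1), inv\<^bsub>G\<^esub> w i \<otimes>\<^bsub>G\<^esub> w (i + 1)) \<in> B"
  show "w' ` I \<subseteq> carrier G" using h by auto
  show "inj_on w' I" using h inj_on_cong by (metis (mono_tags, lifting))
  show "z' ` I \<subseteq> A" using h by auto
  show "\<forall>i. i \<in> I \<and> i + 1 \<in> I \<longrightarrow>
        inv\<^bsub>G\<^esub> w' i \<otimes>\<^bsub>G\<^esub> w' (i + 1) \<in> sym_gens G S \<and>
        (z' i, z' (i + 1), inv\<^bsub>G\<^esub> w' i \<otimes>\<^bsub>G\<^esub> w' (i + 1)) \<in> B"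
    using h by metis
qed

lemma snake_union: assumes "\<And>N. snake_on G S A B (J N) w z" shows "snake_on G S A B UNIV w z"
  unfolding snake_on_def
proof (intro conjI)
  have m: "i \<in> J (nat \<bar>i\<bar> + n)" for i n by (auto simp: J_def)
  show "w ` UNIV \<subseteq> carrier G" using assms m[of _ 0] unfolding snake_on_def by fastforce
  show "z ` UNIV \<subseteq> A" using assms m[of _ 0] unfolding snake_on_def by fastforce
  show "inj_on w UNIV"
  proof (rule inj_onI)
    fix x y assume "w x = w y"
    moreover have "x \<in> J (nat \<bar>x\<bar> + nat \<bar>y\<bar>)" "y \<in> J (nat \<bar>x\<bar> + nat \<bar>y\<bar>)" by (auto simp: J_def)
    ultimately show "x = y" using assms[of "nat \<bar>x\<bar> + nat \<bar>y\<bar>"] unfolding snake_on_def inj_on_def by blast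
  qed
  show "\<forall>i. i \<in> UNIV \<and> i + 1 \<in> UNIV \<longrightarrow>
        inv\<^bsub>G\<^esub> w i \<otimes>\<^bsub>G\<^esub> w (i + 1) \<in> sym_gens G S \<and>
        (z i, z (i + 1), inv\<^bsub>G\<^esub> w i \<otimes>\<^bsub>G\<^esub> w (i + 1)) \<in> B"
  proof (intro allI impI)
    fix i :: int
    have "i \<in> J (nat \<bar>i\<bar> + 1)" "i + 1 \<in> J (nat \<bar>i\<bar> + 1)" by (auto simp: J_def)
    then show "inv\<^bsub>G\<^esub> w i \<otimes>\<^bsub>G\<^esub> w (i + 1) \<in> sym_gens G S \<and>
        (z i, z (i + 1), inv\<^bsub>G\<^esub> w i \<otimes>\<^bsub>G\<^esub> w (i + 1)) \<in> B"
      using assms[of "nat \<bar>i\<bar> + 1"] unfolding snake_on_def by blast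
  qed
qed

fun wball :: "('g, 'b) monoid_scheme \<Rightarrow> 'g set \<Rightarrow> nat \<Rightarrow> 'g set" where
  "wball G S 0 = {\<one>\<^bsub>G\<^esub>}"
| "wball G S (Suc k) = wball G S k \<union> (\<lambda>(x,s). x \<otimes>\<^bsub>G\<^esub> s) ` (wball G S k \<times> sym_gens G S)
     \<union> (\<lambda>(x,s). x \<otimes>\<^bsub>G\<^esub> inv\<^bsub>G\<^esub> s) ` (wball G S k \<times> sym_gens G S)"

lemma finite_wball: "finite S \<Longrightarrow> finite (wball G S k)"
  by (induction k) (auto simp: sym_gens_def)

lemma wball_mono: "m \<le> n \<Longrightarrow> wball G S m \<subseteq> wball G S n"
  by (induction n rule: dec_induct) auto

lemma snake_ball:
  assumes G: "group G" and sn: "snake_on G S A B (J N) w z" and w0: "w 0 = \<one>\<^bsub>G\<^esub>"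
  shows "i \<in> J N \<Longrightarrow> \<bar>i\<bar> \<le> int k \<Longrightarrow> w i \<in> wball G S k"
proof (induction k arbitrary: i)
  case 0 then show ?case using w0 by simp
next
  case (Suc k)
  interpret group G by (rule G)
  have car: "\<And>j. j \<in> J N \<Longrightarrow> w j \<in> carrier G" using sn unfolding snake_on_def by auto
  have edge: "\<And>j. j \<in> J N \<Longrightarrow> j + 1 \<in> J N \<Longrightarrow> inv\<^bsub>G\<^esub> (w j) \<otimes>\<^bsub>G\<^esub> w (j + 1) \<in> sym_gens G S"
    using sn unfolding snake_on_def by auto
  show ?case
  proof (cases "\<bar>i\<bar> \<le> int k")
    case True then show ?thesis using Suc by auto
  next
    case False
    then have "i = int k + 1 \<or> i = - int k - 1" using Suc.prems by auto
    then show ?thesis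
    proof
      assume i: "i = int k + 1"
      have j: "i - 1 \<in> J N" using Suc.prems i by (auto simp: J_def)
      have wj: "w (i - 1) \<in> wball G S k" using Suc.IH[OF j] i by simp
      have s: "inv\<^bsub>G\<^esub> (w (i - 1)) \<otimes>\<^bsub>G\<^esub> w i \<in> sym_gens G S" using edge[OF j] Suc.prems by simp
      have "w i = w (i - 1) \<otimes>\<^bsub>G\<^esub> (inv\<^bsub>G\<^esub> (w (i - 1)) \<otimes>\<^bsub>G\<^esub> w i)"
        using car[OF j] car[OF Suc.prems(1)] by (simp add: m_assoc[symmetric])
      then show ?thesis using wj s by force
    next
      assume i: "i = - int k - 1"
      have j: "i + 1 \<in> J N" using Suc.prems i by (auto simp: J_def)
      have wj: "w (i + 1) \<in> wball G S k" using Suc.IH[OF j] i by simp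
      have s: "inv\<^bsub>G\<^esub> (w i) \<otimes>\<^bsub>G\<^esub> w (i + 1) \<in> sym_gens G S" using edge[OF Suc.prems(1) j] by simp
      have "w i = w (i + 1) \<otimes>\<^bsub>G\<^esub> inv\<^bsub>G\<^esub> (inv\<^bsub>G\<^esub> (w i) \<otimes>\<^bsub>G\<^esub> w (i + 1))"
        using car[OF j] car[OF Suc.prems(1)] by (simp add: inv_mult_group m_assoc[symmetric])
      then show ?thesis using wj s by force
    qed
  qed
qed


lemma grp_aux: assumes "group G" "a \<in> carrier G" "x \<in> carrier G" "y \<in> carrier G"
  shows "inv\<^bsub>G\<^esub> (inv\<^bsub>G\<^esub> a \<otimes>\<^bsub>G\<^esub> x) \<otimes>\<^bsub>G\<^esub> (inv\<^bsub>G\<^esub> a \<otimes>\<^bsub>G\<^esub> y) = inv\<^bsub>G\<^esub> x \<otimes>\<^bsub>G\<^esub> y"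
proof -
  interpret group G by fact
  show ?thesis using assms(2-4) by (simp add: inv_mult_group m_assoc[symmetric]) (simp add: m_assoc)
qed

lemma shift_snake:
  assumes G: "group G" and sn: "snake_on G S A B {n..m} w z" and nm: "n + 2 * int N \<le> m"
  shows "\<exists>f. snake_on G S A B (J N) (\<lambda>i. fst (f i)) (\<lambda>i. snd (f i)) \<and> fst (f 0) = \<one>\<^bsub>G\<^esub>"
proof -
  interpret group G by (rule G)
  define c where "c = n + int N"
  define f where "f i = (inv\<^bsub>G\<^esub> (w c) \<otimes>\<^bsub>G\<^esub> w (i + c), z (i + c))" for i
  have inI: "i + c \<in> {n..m}" if "i \<in> J N" for i using that nm by (auto simp: J_def c_def)
  have cI: "c \<in> {n..m}" using nm by (auto simp: c_def)
  have car: "\<And>j. j \<in> {n..m} \<Longrightarrow> w j \<in> carrier G" using sn unfolding snake_on_def by auto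
  have "snake_on G S A B (J N) (\<lambda>i. fst (f i)) (\<lambda>i. snd (f i))"
    unfolding snake_on_def
  proof (intro conjI)
    show "(\<lambda>i. fst (f i)) ` J N \<subseteq> carrier G" using car inI cI by (auto simp: f_def)
    show "(\<lambda>i. snd (f i)) ` J N \<subseteq> A" using sn inI unfolding snake_on_def by (auto simp: f_def)
    show "inj_on (\<lambda>i. fst (f i)) (J N)"
    proof (rule inj_onI)
      fix x y assume x: "x \<in> J N" and y: "y \<in> J N" and e: "fst (f x) = fst (f y)"
      then have "w (x + c) = w (y + c)" using car[OF inI[OF x]] car[OF inI[OF y]] car[OF cI]
        by (simp add: f_def)
      then have "x + c = y + c" using sn inI[OF x] inI[OF y] unfolding snake_on_def inj_on_def by blast
      then show "x = y" by simp
    qed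
    show "\<forall>i. i \<in> J N \<and> i + 1 \<in> J N \<longrightarrow>
        inv\<^bsub>G\<^esub> fst (f i) \<otimes>\<^bsub>G\<^esub> fst (f (i + 1)) \<in> sym_gens G S \<and>
        (snd (f i), snd (f (i + 1)), inv\<^bsub>G\<^esub> fst (f i) \<otimes>\<^bsub>G\<^esub> fst (f (i + 1))) \<in> B"
    proof (intro allI impI)
      fix i assume "i \<in> J N \<and> i + 1 \<in> J N"
      then have a: "i + c \<in> {n..m}" "i + c + 1 \<in> {n..m}" using inI[of i] inI[of "i+1"]
        by (auto simp: add_ac)
      have eq: "inv\<^bsub>G\<^esub> fst (f i) \<otimes>\<^bsub>G\<^esub> fst (f (i + 1)) = inv\<^bsub>G\<^esub> w (i + c) \<otimes>\<^bsub>G\<^esub> w (i + c + 1)"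
        unfolding f_def using grp_aux[OF G car[OF cI] car[OF a(1)] car[OF a(2)]] by (simp add: add_ac)
      have e2: "snd (f (i + 1)) = z (i + c + 1)" by (simp add: f_def add_ac)
      show "inv\<^bsub>G\<^esub> fst (f i) \<otimes>\<^bsub>G\<^esub> fst (f (i + 1)) \<in> sym_gens G S \<and>
        (snd (f i), snd (f (i + 1)), inv\<^bsub>G\<^esub> fst (f i) \<otimes>\<^bsub>G\<^esub> fst (f (i + 1))) \<in> B"
        unfolding eq e2 using sn a unfolding snake_on_def by (simp add: f_def)
    qed
  qed
  moreover have "fst (f 0) = \<one>\<^bsub>G\<^esub>" using car[OF cI] by (simp add: f_def)
  ultimately show ?thesis by blast
qed

theorem proposition1:
  fixes G :: "('g, 'b) monoid_scheme" and S :: "'g set"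
    and A :: "'a set" and B :: "('a \<times> 'a \<times> 'g) set"
  assumes "group G" and "finite S" and "S \<subseteq> carrier G"
    and "generate G S = carrier G"
    and "tileset_graph G S A B"
  shows "(has_biinfinite_snake G S A B \<longleftrightarrow> has_oneway_snake G S A B) \<and>
         (has_oneway_snake G S A B \<longleftrightarrow> has_snakes_of_every_length G S A B)"
proof -
  have finA: "finite A" using assms(5) unfolding tileset_graph_def by blast
  have bo: "has_oneway_snake G S A B" if "has_biinfinite_snake G S A B"
    using that snake_mono unfolding has_biinfinite_snake_def has_oneway_snake_def by blast
  have oe: "has_snakes_of_every_length G S A B" if "has_oneway_snake G S A B"
  proof -
    from that obtain w z where s: "snake_on G S A B {0..} w z" unfolding has_oneway_snake_def by blast
    show ?thesis unfolding has_snakes_of_every_length_def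
    proof
      fix k :: nat
      have "card {0..int k} \<ge> k" by simp
      moreover have "snake_on G S A B {0..int k} w z" using snake_mono[OF s] by auto
      ultimately show "\<exists>n m w z. card {n..m} \<ge> k \<and> snake_on G S A B {n..m} w z" by blast
    qed
  qed
  have eb: "has_biinfinite_snake G S A B" if e: "has_snakes_of_every_length G S A B"
  proof -
    define P where "P N f \<longleftrightarrow> snake_on G S A B (J N) (\<lambda>i. fst (f i)) (\<lambda>i. snd (f i)) \<and> fst (f 0) = \<one>\<^bsub>G\<^esub>"
      for N and f :: "int \<Rightarrow> 'g \<times> 'a"
    have "\<exists>f. \<forall>N. P N f"
    proof (rule koenig[where V = "\<lambda>k. wball G S k \<times> A"])
      fix N N' f assume "P N' f" "N \<le> N'"
      then show "P N f" unfolding P_def using snake_mono J_mono by blast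
    next
      fix N f f' assume pf: "P N f" and eq: "\<forall>i\<in>J N. f i = f' i"
      have z: "0 \<in> J N" by (simp add: J_def)
      have s: "snake_on G S A B (J N) (\<lambda>i. fst (f i)) (\<lambda>i. snd (f i))" and f0: "fst (f 0) = \<one>\<^bsub>G\<^esub>"
        using pf unfolding P_def by auto
      have "snake_on G S A B (J N) (\<lambda>i. fst (f' i)) (\<lambda>i. snd (f' i))"
        by (rule snake_local[OF s]) (use eq in simp)
      moreover have "fst (f' 0) = \<one>\<^bsub>G\<^esub>" using eq z f0 by simp
      ultimately show "P N f'" unfolding P_def by simp
    next
      fix k show "finite (wball G S k \<times> A)" using finite_wball[OF assms(2)] finA by blast
    next
      fix N f k i assume p: "P N f" "k \<le> N" "i \<in> J k"
      then have iN: "i \<in> J N" using J_mono by blast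
      have "fst (f i) \<in> wball G S k"
        using snake_ball[OF assms(1), of S A B N "\<lambda>i. fst (f i)" "\<lambda>i. snd (f i)" i k] p iN
        unfolding P_def by (auto simp: J_def)
      moreover have "snd (f i) \<in> A" using p iN unfolding P_def snake_on_def by auto
      ultimately show "f i \<in> wball G S k \<times> A" by (simp add: mem_Times_iff)
    next
      fix N
      from e obtain n m w z where "card {n..m} \<ge> 2 * N + 1" "snake_on G S A B {n..m} w z"
        unfolding has_snakes_of_every_length_def by blast
      moreover then have "n + 2 * int N \<le> m" by simp
      ultimately show "\<exists>f. P N f" unfolding P_def using shift_snake[OF assms(1)] by blast
    qed
    then obtain f where "\<And>N. P N f" by blast
    then have "snake_on G S A B UNIV (\<lambda>i. fst (f i)) (\<lambda>i. snd (f i))"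
      unfolding P_def by (intro snake_union) blast
    then show ?thesis unfolding has_biinfinite_snake_def by blast
  qed
  show ?thesis using bo oe eb by blast
qed

end
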